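(* For every split graph $G$, $\eta(G)\leq\chi(G)$, where $\chi(G)$ is the chromatic number of $G$.
   Context: All graphs are finite, simple and undirected. A graph is split if its vertex set can be partitioned into a clique and a stable set. For a vertex $v$, $N(v)$ is its set of neighbours. For a positive integer $k$, $[k]=\{1,\dots,k\}$. For a labeling $f:V(G)\to[k]$ and $S\subseteq V(G)$, $f(S)=\sum_{u\in S}f(u)$. A labeling $f:V(G)\to[k]$ is an additive $k$-coloring if $f(N(u))\neq f(N(v))$ for every edge $(u,v)$ of $G$. The additive chromatic number $\eta(G)$ is the least $k$ for which $G$ has an additive $k$-coloring. *)

theory Defs
  imports Main
begin

definition simple_graph :: "'a set \<Rightarrow> ('a \<Rightarrow> 'a \<Rightarrow> bool) \<Rightarrow> bool" where
  "simple_graph V E \<longleftrightarrow> finite V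
     \<and> (\<forall>u v. E u v \<longrightarrow> u \<in> V \<and> v \<in> V)
     \<and> (\<forall>u v. E u v \<longrightarrow> E v u)
     \<and> (\<forall>u. \<not> E u u)"

definition nbhd :: "'a set \<Rightarrow> ('a \<Rightarrow> 'a \<Rightarrow> bool) \<Rightarrow> 'a \<Rightarrow> 'a set" where
  "nbhd V E v = {u \<in> V. E v u}"

definition is_clique :: "('a \<Rightarrow> 'a \<Rightarrow> bool) \<Rightarrow> 'a set \<Rightarrow> bool" where
  "is_clique E K \<longleftrightarrow> (\<forall>u\<in>K. \<forall>v\<in>K. u \<noteq> v \<longrightarrow> E u v)"

definition is_stable :: "('a \<Rightarrow> 'a \<Rightarrow> bool) \<Rightarrow> 'a set \<Rightarrow> bool" where
  "is_stable E S \<longleftrightarrow> (\<forall>u\<in>S. \<forall>v\<in>S. \<not> E u v)"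

definition split_graph :: "'a set \<Rightarrow> ('a \<Rightarrow> 'a \<Rightarrow> bool) \<Rightarrow> bool" where
  "split_graph V E \<longleftrightarrow> simple_graph V E \<and>
     (\<exists>K S. K \<union> S = V \<and> K \<inter> S = {} \<and> is_clique E K \<and> is_stable E S)"

definition additive_coloring :: "'a set \<Rightarrow> ('a \<Rightarrow> 'a \<Rightarrow> bool) \<Rightarrow> nat \<Rightarrow> ('a \<Rightarrow> nat) \<Rightarrow> bool" where
  "additive_coloring V E k f \<longleftrightarrow> (\<forall>v\<in>V. f v \<in> {1..k})
     \<and> (\<forall>u v. E u v \<longrightarrow> (\<Sum>w\<in>nbhd V E u. f w) \<noteq> (\<Sum>w\<in>nbhd V E v. f w))"

definition additive_chromatic_number :: "'a set \<Rightarrow> ('a \<Rightarrow> 'a \<Rightarrow> bool) \<Rightarrow> nat" where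
  "additive_chromatic_number V E = (LEAST k. k \<ge> 1 \<and> (\<exists>f. additive_coloring V E k f))"

definition proper_coloring :: "'a set \<Rightarrow> ('a \<Rightarrow> 'a \<Rightarrow> bool) \<Rightarrow> nat \<Rightarrow> ('a \<Rightarrow> nat) \<Rightarrow> bool" where
  "proper_coloring V E k f \<longleftrightarrow> (\<forall>v\<in>V. f v \<in> {1..k})
     \<and> (\<forall>u v. E u v \<longrightarrow> f u \<noteq> f v)"

definition chromatic_number :: "'a set \<Rightarrow> ('a \<Rightarrow> 'a \<Rightarrow> bool) \<Rightarrow> nat" where
  "chromatic_number V E = (LEAST k. k \<ge> 1 \<and> (\<exists>f. proper_coloring V E k f))"

end

theory Submission
  imports Defs
begin

lemma arith_aux:
  fixes A B a b d e k m T :: nat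
  assumes "A + k*d = B + k*e" "A + a = T" "B + b = T" "1 \<le> a" "a \<le> m" "1 \<le> b" "b \<le> m" "m \<le> k"
  shows "a = b"
proof -
  have "\<not> d < e"
  proof
    assume "d < e"
    then have "k*d + k \<le> k*e"
      by (metis Suc_leI mult_Suc_right add.commute mult_le_mono2)
    then show False using assms by linarith
  qed
  moreover have "\<not> e < d"
  proof
    assume "e < d"
    then have "k*e + k \<le> k*d"
      by (metis Suc_leI mult_Suc_right add.commute mult_le_mono2)
    then show False using assms by linarith
  qed
  ultimately have "d = e" by simp
  then show ?thesis using assms by simp
qed

theorem mainTheorem10:
  fixes V :: "'a set" and E :: "'a \<Rightarrow> 'a \<Rightarrow> bool"
  assumes "split_graph V E"
  shows "additive_chromatic_number V E \<le> chromatic_number V E"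
proof -
  obtain K S where KS: "K \<union> S = V" "K \<inter> S = {}" "is_clique E K" "is_stable E S"
    and sg: "simple_graph V E"
    using assms unfolding split_graph_def by blast
  have finV: "finite V" and inV: "\<And>u v. E u v \<Longrightarrow> u \<in> V \<and> v \<in> V"
    and sym: "\<And>u v. E u v \<Longrightarrow> E v u" and irr: "\<And>u. \<not> E u u"
    using sg unfolding simple_graph_def by blast+
  have finK: "finite K" and finS: "finite S" using KS(1) finV by auto
  obtain h n where hn: "h ` V = {i::nat. i < n}" "inj_on h V"
    using finite_imp_inj_to_nat_seg[OF finV] by blast
  have "proper_coloring V E (max 1 n) (\<lambda>v. h v + 1)"
    unfolding proper_coloring_def
  proof (intro conjI allI impI ballI)
    fix v assume "v \<in> V"
    then have "h v < n" using hn(1) by auto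
    then show "h v + 1 \<in> {1..max 1 n}" by auto
  next
    fix u v assume "E u v"
    then have "u \<in> V" "v \<in> V" "u \<noteq> v" using inV irr by blast+
    then show "h u + 1 \<noteq> h v + 1" using hn(2) by (auto dest: inj_onD)
  qed
  then have ex: "\<exists>k. k \<ge> 1 \<and> (\<exists>f. proper_coloring V E k f)" by (intro exI[of _ "max 1 n"]) auto
  define k where "k = chromatic_number V E"
  have "k \<ge> 1 \<and> (\<exists>f. proper_coloring V E k f)"
    unfolding k_def chromatic_number_def by (rule LeastI_ex[OF ex])
  then obtain g where k1: "k \<ge> 1" and g: "proper_coloring V E k g" by blast
  have gK: "\<And>v. v \<in> V \<Longrightarrow> g v \<in> {1..k}" and gE: "\<And>u v. E u v \<Longrightarrow> g u \<noteq> g v"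
    using g unfolding proper_coloring_def by blast+
  have ginj: "inj_on g K"
    using KS(3) gE unfolding is_clique_def inj_on_def by blast
  have mk: "card K \<le> k"
  proof -
    have "g ` K \<subseteq> {1..k}" using gK KS(1) by blast
    then show ?thesis using card_inj_on_le[OF ginj, of "{1..k}"] by simp
  qed
  have full: "card K < k" if "s \<in> S" "\<forall>u\<in>K. E s u" for s
  proof -
    have "inj_on g (insert s K)"
      using ginj gE that unfolding inj_on_def by (metis insert_iff sym)
    moreover have "s \<notin> K" using that KS(2) by blast
    moreover have "g ` insert s K \<subseteq> {1..k}" using gK KS(1) that(1) by blast
    ultimately have "card (insert s K) \<le> k"
      using card_inj_on_le[of g "insert s K" "{1..k}"] by simp
    then show ?thesis using \<open>s \<notin> K\<close> finK by simp
  qed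
  obtain f m where fm: "f ` K = {i::nat. i < m}" "inj_on f K"
    using finite_imp_inj_to_nat_seg[OF finK] by blast
  have mK: "m = card K"
    using fm card_image[OF fm(2)] by simp
  define lab where "lab v = (if v \<in> K then f v + 1 else k)" for v
  have labK: "\<And>v. v \<in> K \<Longrightarrow> 1 \<le> lab v \<and> lab v \<le> card K"
  proof -
    fix v assume "v \<in> K"
    then have "f v < m" using fm(1) by auto
    then show "1 \<le> lab v \<and> lab v \<le> card K" using \<open>v \<in> K\<close> mK unfolding lab_def by auto
  qed
  define T where "T = (\<Sum>w\<in>K. lab w)"
  define dS where "dS u = card {s\<in>S. E u s}" for u
  have sumK: "(\<Sum>w\<in>nbhd V E u. lab w) = (\<Sum>w\<in>K-{u}. lab w) + k * dS u"
    and TK: "(\<Sum>w\<in>K-{u}. lab w) + lab u = T"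
    if "u \<in> K" for u
  proof -
    have "nbhd V E u = (K - {u}) \<union> {s\<in>S. E u s}"
      using KS(1,3) irr that unfolding nbhd_def is_clique_def by auto
    moreover have "(K - {u}) \<inter> {s\<in>S. E u s} = {}" using KS(2) by auto
    ultimately have "(\<Sum>w\<in>nbhd V E u. lab w) = (\<Sum>w\<in>K-{u}. lab w) + (\<Sum>w\<in>{s\<in>S. E u s}. lab w)"
      using finK finS by (simp add: sum.union_disjoint)
    moreover have "(\<Sum>w\<in>{s\<in>S. E u s}. lab w) = k * dS u"
    proof -
      have "(\<Sum>w\<in>{s\<in>S. E u s}. lab w) = (\<Sum>w\<in>{s\<in>S. E u s}. k)"
        using KS(2) unfolding lab_def by (intro sum.cong) auto
      then show ?thesis unfolding dS_def by simp
    qed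
    ultimately show "(\<Sum>w\<in>nbhd V E u. lab w) = (\<Sum>w\<in>K-{u}. lab w) + k * dS u" by simp
    show "(\<Sum>w\<in>K-{u}. lab w) + lab u = T"
      unfolding T_def using finK that by (simp add: sum.remove)
  qed
  have sumS: "(\<Sum>w\<in>nbhd V E s. lab w) = (\<Sum>w\<in>{u\<in>K. E s u}. lab w)" if "s \<in> S" for s
  proof -
    have "nbhd V E s = {u\<in>K. E s u}"
      using KS(1,4) that unfolding nbhd_def is_stable_def by auto
    then show ?thesis by simp
  qed
  have KSneq: "(\<Sum>w\<in>nbhd V E u. lab w) \<noteq> (\<Sum>w\<in>nbhd V E s. lab w)"
    if "u \<in> K" "s \<in> S" "E u s" for u s
  proof -
    have "dS u \<ge> 1"
    proof -
      have "s \<in> {s\<in>S. E u s}" using that by simp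
      then have "{s\<in>S. E u s} \<noteq> {}" by blast
      then show ?thesis unfolding dS_def using finS by (simp add: Suc_le_eq card_gt_0_iff)
    qed
    then have "k \<le> k * dS u" by simp
    then have A: "(\<Sum>w\<in>K-{u}. lab w) + k \<le> (\<Sum>w\<in>nbhd V E u. lab w)"
      using sumK[OF that(1)] by simp
    have B: "(\<Sum>w\<in>{v\<in>K. E s v}. lab w) < T" if nf: "\<not> (\<forall>v\<in>K. E s v)"
    proof -
      obtain v where v: "v \<in> K" "\<not> E s v" using nf by blast
      have sub: "{x\<in>K. E s x} \<subseteq> K - {v}" using v by auto
      have "(\<Sum>w\<in>{x\<in>K. E s x}. lab w) \<le> (\<Sum>w\<in>K - {v}. lab w)"
        using finK sub by (intro sum_mono2) auto
      moreover have "(\<Sum>w\<in>K - {v}. lab w) + lab v = T" using TK[OF v(1)] .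
      moreover have "lab v \<ge> 1" using labK[OF v(1)] by simp
      ultimately show ?thesis by linarith
    qed
    show ?thesis
    proof (cases "\<forall>v\<in>K. E s v")
      case True
      then have "card K < k" using full that(2) by blast
      then have "lab u < k" using labK[OF that(1)] by simp
      then have "T < (\<Sum>w\<in>nbhd V E u. lab w)" using A TK[OF that(1)] by linarith
      moreover have "{v\<in>K. E s v} = K" using True by auto
      then have "(\<Sum>w\<in>nbhd V E s. lab w) \<le> T"
        using sumS[OF that(2)] T_def by simp
      ultimately show ?thesis by simp
    next
      case False
      have "lab u \<le> k" using labK[OF that(1)] mk by simp
      then have "T \<le> (\<Sum>w\<in>nbhd V E u. lab w)" using A TK[OF that(1)] by linarith
      then show ?thesis using B[OF False] sumS[OF that(2)] by simp
    qed
  qed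
  have "additive_coloring V E k lab"
    unfolding additive_coloring_def
  proof (intro conjI allI impI ballI)
    fix v assume "v \<in> V"
    then show "lab v \<in> {1..k}" using labK mk k1 unfolding lab_def
      by (cases "v \<in> K") (auto, metis le_trans)
  next
    fix u v assume e: "E u v"
    have uV: "u \<in> V" "v \<in> V" "u \<noteq> v" using inV irr e by blast+
    show "(\<Sum>w\<in>nbhd V E u. lab w) \<noteq> (\<Sum>w\<in>nbhd V E v. lab w)"
    proof (cases "u \<in> K")
      case uK: True
      show ?thesis
      proof (cases "v \<in> K")
        case vK: True
        show ?thesis
        proof
          assume eq: "(\<Sum>w\<in>nbhd V E u. lab w) = (\<Sum>w\<in>nbhd V E v. lab w)"
          have "lab u = lab v"
            using arith_aux[of "\<Sum>w\<in>K-{u}. lab w" k "dS u" "\<Sum>w\<in>K-{v}. lab w" "dS v" "lab u" T "lab v" "card K"]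
              eq sumK[OF uK] sumK[OF vK] TK[OF uK] TK[OF vK] labK[OF uK] labK[OF vK] mk by simp
          then have "f u = f v" using uK vK unfolding lab_def by simp
          then show False using fm(2) uK vK uV(3) by (auto dest: inj_onD)
        qed
      next
        case False
        then have "v \<in> S" using uV KS(1) by blast
        then show ?thesis using KSneq uK e by blast
      qed
    next
      case False
      then have uS: "u \<in> S" using uV KS(1) by blast
      then have "v \<notin> S" using KS(4) e unfolding is_stable_def by blast
      then have "v \<in> K" using uV KS(1) by blast
      then show ?thesis using KSneq[of v u] uS sym[OF e] by metis
    qed
  qed
  then show ?thesis
    unfolding additive_chromatic_number_def k_def[symmetric]
    using k1 by (intro Least_le) blast
qed

end
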